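(* Let $A_t$, $t\in I$ ($I$ an interval containing $0$), solve the ODE $\dot A_t=A_t[A_t,A_t^*]$ in $\mathfrak{gl}_n(\mathbb C)$. Then $\operatorname{spec}A_t=\operatorname{spec}A_0$ for all $t\in I$.
   Context: $A^*$ is the conjugate transpose, $[X,Y]=XY-YX$, and $\operatorname{spec}$ denotes the set of eigenvalues (the proof in fact gives equality of characteristic polynomials). *)

theory Defs
  imports "HOL-Analysis.Analysis"
begin

definition conj_transpose :: "complex^'n^'n \<Rightarrow> complex^'n^'n" where
  "conj_transpose A = (\<chi> i j. cnj (A $ j $ i))"

definition commutator :: "complex^'n^'n \<Rightarrow> complex^'n^'n \<Rightarrow> complex^'n^'n" where
  "commutator X Y = X ** Y - Y ** X"

definition spec :: "complex^'n^'n \<Rightarrow> complex set" where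
  "spec A = {c. \<exists>v. v \<noteq> 0 \<and> A *v v = c *s v}"

end

theory Submission
  imports Defs
begin

lemma mat_c_mulv: "(mat c :: complex^'n^'n) *v v = c *s v"
  apply (vector matrix_vector_mult_def mat_def)
  apply (simp add: if_distrib if_distribR cong del: if_weak_cong)
  done

lemma mat_c_comm: "(mat c :: complex^'n^'n) ** X = X ** mat c"
  apply (vector matrix_matrix_mult_def mat_def)
  apply (simp add: if_distrib if_distribR mult.commute cong del: if_weak_cong)
  done

lemma spec_det: "c \<in> spec (A::complex^'n^'n) \<longleftrightarrow> det (A - mat c) = 0"
proof -
  have lin: "Vector_Spaces.linear (*s) (*s) ((*v) (A - mat c))" by simp
  have "det (A - mat c) \<noteq> 0 \<longleftrightarrow> inj ((*v) (A - mat c))"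
    using det_nz_iff_inj_gen[OF lin] by simp
  also have "\<dots> \<longleftrightarrow> (\<forall>v. (A - mat c) *v v = 0 \<longrightarrow> v = 0)"
    by (simp add: vec.inj_iff_eq_0)
  also have "\<dots> \<longleftrightarrow> c \<notin> spec A"
    by (auto simp: spec_def matrix_vector_mult_diff_rdistrib mat_c_mulv)
  finally show ?thesis by blast
qed

definition Drow :: "complex^'n^'n \<Rightarrow> complex^'n^'n \<Rightarrow> complex" where
  "Drow P H = (\<Sum>k\<in>UNIV. \<Sum>p\<in>{p. p permutes (UNIV::'n set)}.
      of_int (sign p) * (H$k$p k * (\<Prod>i\<in>UNIV-{k}. P$i$p i)))"

lemma Drow_rows: "Drow P H = (\<Sum>k\<in>UNIV. det (\<chi> i. if i = k then H$i else P$i))"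
  unfolding Drow_def det_def
proof (rule sum.cong[OF refl], rule sum.cong[OF refl])
  fix k p
  have "(\<Prod>i\<in>UNIV. (\<chi> i. if i = k then H$i else P$i) $ i $ p i)
      = (\<chi> i. if i = k then H$i else P$i) $ k $ p k * (\<Prod>i\<in>UNIV-{k}. (\<chi> i. if i = k then H$i else P$i) $ i $ p i)"
    by (rule prod.remove) auto
  also have "\<dots> = H$k$p k * (\<Prod>i\<in>UNIV-{k}. P$i$p i)"
    by (auto intro!: prod.cong)
  finally show "of_int (sign p) * (H$k$p k * (\<Prod>i\<in>UNIV-{k}. P$i$p i)) =
     of_int (sign p) * (\<Prod>i\<in>UNIV. (\<chi> i. if i = k then H$i else P$i) $ i $ p i)" by simp
qed

lemma Drow_diff: "Drow P (H1 - H2) = Drow P H1 - Drow P H2"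
  unfolding Drow_def by (simp add: algebra_simps sum_subtractf)

lemma det_deriv:
  fixes M :: "real \<Rightarrow> complex^'n^'n"
  assumes "(M has_vector_derivative H) (at t within S)"
  shows "((\<lambda>t. det (M t)) has_vector_derivative Drow (M t) H) (at t within S)"
proof -
  have comp: "((\<lambda>t. M t $ i $ j) has_vector_derivative H $ i $ j) (at t within S)" for i j
  proof -
    have bl: "bounded_linear (\<lambda>X::complex^'n^'n. X $ i $ j)"
      by (intro bounded_linear_compose[OF bounded_linear_vec_nth] bounded_linear_vec_nth)
    show ?thesis using bounded_linear.has_vector_derivative[OF bl assms] .
  qed
  have "((\<lambda>t. \<Sum>p\<in>{p. p permutes (UNIV::'n set)}. of_int (sign p) * (\<Prod>i\<in>UNIV. M t $ i $ p i))
     has_vector_derivative (\<Sum>p\<in>{p. p permutes (UNIV::'n set)}. of_int (sign p) *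
        (\<Sum>k\<in>UNIV. H$k$p k * (\<Prod>i\<in>UNIV-{k}. M t $i$p i)))) (at t within S)"
  proof (intro has_vector_derivative_sum has_vector_derivative_mult_right)
    fix p :: "'n \<Rightarrow> 'n"
    show "((\<lambda>t. \<Prod>i\<in>UNIV. M t $ i $ p i) has_vector_derivative
          (\<Sum>k\<in>UNIV. H$k$p k * (\<Prod>i\<in>UNIV-{k}. M t $i$p i))) (at t within S)"
      unfolding has_vector_derivative_def
      apply (rule has_derivative_eq_rhs)
       apply (rule has_derivative_prod)
       apply (rule comp[unfolded has_vector_derivative_def])
      apply (simp add: fun_eq_iff scaleR_sum_right)
      done
  qed
  then show ?thesis
    unfolding det_def Drow_def
    by (simp add: sum_distrib_left sum.swap[of _ UNIV])
qed

lemma row_XP: "det (\<chi> i. if i = k then (X ** P) $ i else P $ i) = X$k$k * det (P::complex^'n^'n)"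
proof -
  define A' :: "complex^'n^'n" where "A' = (\<chi> i. if i = k then X$k$k *s P$i else P$i)"
  define x where "x = (\<Sum>j\<in>UNIV-{k}. X$k$j *s P$j)"
  have rowA: "row j A' = (if j = k then X$k$k *s P$j else P$j)" for j
    by (simp add: row_def A'_def vec_eq_iff)
  have dA: "det A' = X$k$k * det P"
    unfolding A'_def using det_row_mul[of k "X$k$k" "\<lambda>i. P$i" "\<lambda>i. P$i"] by simp
  have xs: "x \<in> vec.span {row j A' |j. j \<noteq> k}"
    unfolding x_def
    by (intro vec.span_sum vec.span_scale vec.span_base) (auto simp: rowA)
  have XP: "(X ** P) $ k = X$k$k *s P$k + x"
  proof -
    have "(X ** P) $ k = (\<Sum>j\<in>UNIV. X$k$j *s P$j)"
      by (simp add: vec_eq_iff matrix_matrix_mult_def)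
    also have "\<dots> = X$k$k *s P$k + x"
      unfolding x_def by (subst sum.remove[of UNIV k]) auto
    finally show ?thesis .
  qed
  have "(\<chi> i. if i = k then (X ** P) $ i else P $ i) = (\<chi> i. if i = k then row k A' + x else row i A')"
    by (auto simp: vec_eq_iff rowA XP)
  then show ?thesis using det_row_span[OF xs] dA by simp
qed

lemma Drow_XP: "Drow P (X ** P) = trace X * det (P::complex^'n^'n)"
  unfolding Drow_rows row_XP trace_def by (simp add: sum_distrib_right)

lemma Drow_transpose: "Drow P H = Drow (transpose P) (transpose (H::complex^'n^'n))"
proof -
  have d: "((\<lambda>s::real. P + s *\<^sub>R H) has_vector_derivative H) (at 0)"
    by (auto intro!: derivative_eq_intros)
  have dt: "((\<lambda>s::real. transpose P + s *\<^sub>R transpose H) has_vector_derivative transpose H) (at 0)"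
    by (auto intro!: derivative_eq_intros)
  have eq: "det (P + s *\<^sub>R H) = det (transpose P + s *\<^sub>R transpose H)" for s :: real
  proof -
    have "transpose (P + s *\<^sub>R H) = transpose P + s *\<^sub>R transpose H"
      by (simp add: transpose_def vec_eq_iff)
    then show ?thesis by (metis det_transpose)
  qed
  have 1: "((\<lambda>s::real. det (P + s *\<^sub>R H)) has_vector_derivative Drow P H) (at 0)"
    using det_deriv[OF d] by simp
  have 2: "((\<lambda>s::real. det (P + s *\<^sub>R H)) has_vector_derivative Drow (transpose P) (transpose H)) (at 0)"
    using det_deriv[OF dt] eq by simp
  show ?thesis using vector_derivative_unique_at[OF 1 2] .
qed

lemma trace_transpose': "trace (transpose X) = trace (X::complex^'n^'n)"
  by (simp add: trace_def transpose_def)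

lemma Drow_PX: "Drow P (P ** X) = trace X * det (P::complex^'n^'n)"
  by (simp add: Drow_transpose[of P] matrix_transpose_mul Drow_XP trace_transpose')

lemma msub_l: "(A::complex^'n^'n) ** (B - C) = A ** B - A ** C"
  by (simp add: vec_eq_iff matrix_matrix_mult_def algebra_simps sum_subtractf)
lemma msub_r: "((B::complex^'n^'n) - C) ** A = B ** A - C ** A"
  by (simp add: vec_eq_iff matrix_matrix_mult_def algebra_simps sum_subtractf)

theorem lemma4p3:
  fixes A :: "real \<Rightarrow> complex^'n^'n" and I :: "real set"
  assumes "is_interval I" and "0 \<in> I"
    and "\<And>t. t \<in> I \<Longrightarrow>
           (A has_vector_derivative (A t ** commutator (A t) (conj_transpose (A t)))) (at t within I)"
  shows "\<forall>t\<in>I. spec (A t) = spec (A 0)"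
proof -
  have const: "det (A t - mat c) = det (A 0 - mat c)" if t: "t \<in> I" for t c
  proof -
    have "(\<lambda>t. det (A t - mat c) - det (A 0 - mat c)) t = 0"
    proof (rule has_vector_derivative_zero_constant[OF is_interval_convex[OF assms(1)]])
      fix s assume s: "s \<in> I"
      define M where "M = A s - mat c"
      define X where "X = A s ** conj_transpose (A s)"
      have eqd: "A s ** commutator (A s) (conj_transpose (A s)) = M ** X - X ** M"
        unfolding M_def X_def commutator_def
        apply (simp add: msub_l msub_r mat_c_comm matrix_mul_assoc)
        by (metis mat_c_comm matrix_mul_assoc)
      have dM: "((\<lambda>t. A t - mat c) has_vector_derivative (M ** X - X ** M)) (at s within I)"
        using has_vector_derivative_diff[OF assms(3)[OF s] has_vector_derivative_const[of "mat c"]]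
        by (simp add: eqd)
      have "((\<lambda>t. det (A t - mat c)) has_vector_derivative Drow M (M ** X - X ** M)) (at s within I)"
        using det_deriv[OF dM] by (simp add: M_def)
      moreover have "Drow M (M ** X - X ** M) = 0"
        by (simp add: Drow_diff Drow_PX Drow_XP)
      ultimately have "((\<lambda>t. det (A t - mat c)) has_vector_derivative 0) (at s within I)" by simp
      then show "((\<lambda>t. det (A t - mat c) - det (A 0 - mat c)) has_vector_derivative 0) (at s within I)"
        using has_vector_derivative_diff[OF _ has_vector_derivative_const] by fastforce
    next
      fix f assume h: "\<And>x. x \<in> I \<Longrightarrow> (\<lambda>t. det (A t - mat c) - det (A 0 - mat c)) x = f"
      have "f = 0" using h[OF assms(2)] by simp
      then show "(\<lambda>t. det (A t - mat c) - det (A 0 - mat c)) t = 0"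
        using h[OF t] by simp
    qed
    then show ?thesis by simp
  qed
  show ?thesis
    using const by (auto simp: spec_det)
qed

end
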